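(* Let $H$ be a graph with vertex set $A\cup\{v\}$, where $v\notin A$, $A$ is a clique, and $v$ has both a neighbour and a non-neighbour in $A$. Let $F$ be a spanning subgraph of $H$ obtained by removing some (possibly all) edges incident to $v$. Then $H\xrightarrow{\cap} F$.
   Context: All graphs are finite and simple. For graphs $G_1=(V_1,E_1)$, $G_2=(V_2,E_2)$, $G_1\cap G_2=(V_1\cap V_2, E_1\cap E_2)$. For a graph $G=(V,E)$ and an injective map $\alpha$ on $V$, $G^{\alpha}$ has vertex set $\alpha(V)$ and edge set $\{\{\alpha(v),\alpha(w)\}: \{v,w\}\in E\}$. We write $G\xrightarrow{\cap} H$ if $H=G^{\alpha_1}\cap\cdots\cap G^{\alpha_k}$ for some $k\ge1$ and injective maps $\alpha_1,\dots,\alpha_k$ on $V(G)$. *)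

theory Defs
  imports Main
begin

type_synonym 'a graph = "'a set \<times> 'a set set"

definition simple_graph :: "'a graph \<Rightarrow> bool" where
  "simple_graph G \<longleftrightarrow> finite (fst G) \<and>
     (\<forall>e\<in>snd G. e \<subseteq> fst G \<and> card e = 2)"

definition graph_map :: "('a \<Rightarrow> 'a) \<Rightarrow> 'a graph \<Rightarrow> 'a graph" where
  "graph_map \<alpha> G = (\<alpha> ` fst G, (\<lambda>e. \<alpha> ` e) ` snd G)"

definition cap_arrow :: "'a graph \<Rightarrow> 'a graph \<Rightarrow> bool" where
  "cap_arrow G H \<longleftrightarrow> (\<exists>k::nat. k \<ge> 1 \<and> (\<exists>\<alpha>s :: nat \<Rightarrow> 'a \<Rightarrow> 'a.
     (\<forall>i<k. inj_on (\<alpha>s i) (fst G)) \<and>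
     H = ((\<Inter>i<k. fst (graph_map (\<alpha>s i) G)), (\<Inter>i<k. snd (graph_map (\<alpha>s i) G)))))"

end

theory Submission
  imports Defs
begin

definition sw :: "'a \<Rightarrow> 'a \<Rightarrow> 'a \<Rightarrow> 'a" where
  "sw a b x = (if x = a then b else if x = b then a else x)"

lemma sw_sw[simp]: "sw a b (sw a b x) = x"
  by (simp add: sw_def)

lemma sw_img_img[simp]: "sw a b ` (sw a b ` X) = X"
  by (simp add: image_image)

lemma mem_img_sw: "X \<in> (\<lambda>e. sw a b ` e) ` E \<longleftrightarrow> sw a b ` X \<in> E"
proof
  assume "X \<in> (\<lambda>e. sw a b ` e) ` E"
  then obtain e where "e \<in> E" "X = sw a b ` e" by blast
  then show "sw a b ` X \<in> E" by simp
next
  assume "sw a b ` X \<in> E"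
  then show "X \<in> (\<lambda>e. sw a b ` e) ` E"
    by (metis image_eqI sw_img_img)
qed

lemma inj_sw: "inj_on (sw a b) X"
  by (metis inj_on_inverseI sw_sw)

lemma sw_ins: "a \<in> A \<Longrightarrow> b \<in> A \<Longrightarrow> v \<notin> A \<Longrightarrow> sw a b ` insert v A = insert v A"
  unfolding sw_def by (auto simp: image_def)

theorem mainTheorem10:
  fixes A :: "'a set" and v :: 'a and H F :: "'a graph"
  assumes "simple_graph H"
    and "fst H = insert v A"
    and "v \<notin> A"
    and "\<forall>x\<in>A. \<forall>y\<in>A. x \<noteq> y \<longrightarrow> {x, y} \<in> snd H"
    and "\<exists>a\<in>A. {v, a} \<in> snd H"
    and "\<exists>b\<in>A. {v, b} \<notin> snd H"
    and "fst F = fst H"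
    and "snd F \<subseteq> snd H"
    and "\<forall>e\<in>snd H - snd F. v \<in> e"
  shows "cap_arrow H F"
proof -
  obtain b where b: "b \<in> A" "{v, b} \<notin> snd H" using assms(6) by blast
  define S where "S = {s\<in>A. {v,s} \<in> snd H \<and> {v,s} \<notin> snd F}"
  have finA: "finite A" using assms(1,2) unfolding simple_graph_def by (metis finite_insert)
  have finS: "finite S" unfolding S_def using finA by simp
  obtain f where f: "bij_betw f {0..<card S} S" using ex_bij_betw_nat_finite[OF finS] by blast
  have fS: "\<And>i. i < card S \<Longrightarrow> f i \<in> S" using f unfolding bij_betw_def by auto
  have Sb: "\<And>s. s \<in> S \<Longrightarrow> s \<in> A \<and> s \<noteq> b" unfolding S_def using b by auto
  define \<alpha>s where "\<alpha>s i = (if i < card S then sw (f i) b else id)" for i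
  define k where "k = Suc (card S)"
  have inj: "\<forall>i<k. inj_on (\<alpha>s i) (fst H)"
    unfolding \<alpha>s_def by (simp add: inj_sw)
  have V: "\<And>i. fst (graph_map (\<alpha>s i) H) = insert v A"
  proof -
    fix i
    show "fst (graph_map (\<alpha>s i) H) = insert v A"
    proof (cases "i < card S")
      case True
      then have "f i \<in> A" using fS Sb by blast
      have "sw (f i) b ` insert v A = insert v A" using sw_ins[OF \<open>f i \<in> A\<close> b(1) assms(3)] .
      then show ?thesis unfolding \<alpha>s_def graph_map_def using True assms(2) by (simp del: image_insert)
    qed (simp add: \<alpha>s_def graph_map_def assms(2))
  qed
  have E: "\<And>i x. x \<in> snd (graph_map (\<alpha>s i) H) \<longleftrightarrow> \<alpha>s i ` x \<in> snd H"
    unfolding \<alpha>s_def graph_map_def by (simp add: mem_img_sw)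
  have edges: "x \<in> snd F \<longleftrightarrow> x \<in> snd H \<and> (\<forall>s\<in>S. sw s b ` x \<in> snd H)" for x
  proof
    assume xF: "x \<in> snd F"
    then have xH: "x \<in> snd H" using assms(8) by auto
    then have "x \<subseteq> insert v A" "card x = 2" using assms(1,2) unfolding simple_graph_def by auto
    then obtain p q where pq: "x = {p,q}" "p \<noteq> q" "p \<in> insert v A" "q \<in> insert v A"
    proof -
      obtain p q where "x = {p,q}" "p \<noteq> q" using \<open>card x = 2\<close> unfolding card_2_iff by blast
      then show ?thesis using that \<open>x \<subseteq> insert v A\<close> by blast
    qed
    have "sw s b ` x \<in> snd H" if s: "s \<in> S" for s
    proof -
      have sA: "s \<in> A" "s \<noteq> b" and sv: "{v,s} \<notin> snd F" using Sb s S_def by auto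
      have im: "sw s b ` x = {sw s b p, sw s b q}" using pq by simp
      show ?thesis
      proof (cases "p = v \<or> q = v")
        case False
        then have "p \<in> A" "q \<in> A" using pq by auto
        then have "sw s b p \<in> A" "sw s b q \<in> A" "sw s b p \<noteq> sw s b q"
          using sA b pq(2) unfolding sw_def by auto
        then show ?thesis using im assms(4) by auto
      next
        case True
        then obtain y where y: "x = {v,y}" "y \<in> A" 
        proof (cases "p = v")
          case True then show ?thesis using that pq by blast
        next
          case False then have "q = v" using \<open>p = v \<or> q = v\<close> by blast
          then show ?thesis using that pq False by (metis insert_commute insertE)
        qed
        have "y \<noteq> s" using y sv xF by auto
        moreover have "y \<noteq> b" using y xH b by auto
        ultimately have "sw s b ` x = x" using y sA b assms(3) unfolding sw_def by auto
        then show ?thesis using xH by simp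
      qed
    qed
    then show "x \<in> snd H \<and> (\<forall>s\<in>S. sw s b ` x \<in> snd H)" using xH by auto
  next
    assume h: "x \<in> snd H \<and> (\<forall>s\<in>S. sw s b ` x \<in> snd H)"
    show "x \<in> snd F"
    proof (rule ccontr)
      assume nF: "x \<notin> snd F"
      then have "v \<in> x" using h assms(9) by auto
      moreover have "x \<subseteq> insert v A" "card x = 2" using h assms(1,2) unfolding simple_graph_def by auto
      ultimately obtain y where y: "x = {v,y}" "y \<in> A"
      proof -
        obtain p q where pq: "x = {p,q}" "p \<noteq> q" using \<open>card x = 2\<close> unfolding card_2_iff by blast
        show ?thesis
        proof (cases "p = v")
          case True then show ?thesis using that pq \<open>x \<subseteq> insert v A\<close> by auto
        next
          case False then have "q = v" using pq \<open>v \<in> x\<close> by blast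
          then show ?thesis using that pq False \<open>x \<subseteq> insert v A\<close> by (auto simp: insert_commute)
        qed
      qed
      then have yS: "y \<in> S" unfolding S_def using h nF by auto
      then have "y \<noteq> b" using Sb by auto
      then have "sw y b ` x = {v,b}" using y assms(3) b unfolding sw_def by auto
      then show False using h yS b by auto
    qed
  qed
  have k1: "k \<ge> 1" unfolding k_def by simp
  have VV: "(\<Inter>i<k. fst (graph_map (\<alpha>s i) H)) = fst F"
  proof -
    have "{..<k} \<noteq> {}" unfolding k_def by auto
    then show ?thesis by (simp only: V assms(7,2) INT_constant if_False)
  qed
  have EE: "(\<Inter>i<k. snd (graph_map (\<alpha>s i) H)) = snd F"
  proof (rule set_eqI)
    fix x
    have "x \<in> (\<Inter>i<k. snd (graph_map (\<alpha>s i) H)) \<longleftrightarrow> (\<forall>i<k. \<alpha>s i ` x \<in> snd H)"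
      using E by auto
    also have "\<dots> \<longleftrightarrow> x \<in> snd H \<and> (\<forall>s\<in>S. sw s b ` x \<in> snd H)"
    proof
      assume a: "\<forall>i<k. \<alpha>s i ` x \<in> snd H"
      have "x \<in> snd H" using a[rule_format, of "card S"] unfolding k_def \<alpha>s_def by simp
      moreover have "sw s b ` x \<in> snd H" if sS: "s \<in> S" for s
      proof -
        obtain i where "i < card S" "f i = s" using f sS unfolding bij_betw_def by (metis atLeastLessThan_iff imageE)
        then show ?thesis using a[rule_format, of i] unfolding k_def \<alpha>s_def by simp
      qed
      ultimately show "x \<in> snd H \<and> (\<forall>s\<in>S. sw s b ` x \<in> snd H)" by blast
    next
      assume a: "x \<in> snd H \<and> (\<forall>s\<in>S. sw s b ` x \<in> snd H)"
      show "\<forall>i<k. \<alpha>s i ` x \<in> snd H"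
        using a fS unfolding k_def \<alpha>s_def by auto
    qed
    also have "\<dots> \<longleftrightarrow> x \<in> snd F" using edges by simp
    finally show "x \<in> (\<Inter>i<k. snd (graph_map (\<alpha>s i) H)) \<longleftrightarrow> x \<in> snd F" .
  qed
  show ?thesis unfolding cap_arrow_def
    apply (rule exI[of _ k], rule conjI[OF k1], rule exI[of _ \<alpha>s])
    using inj VV EE by (simp add: prod_eq_iff)
qed

end
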